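(* Let $G$ be a finite group and let $N$ be the last term of its descending (lower) central series. Let $I$ be any set and $H=G^I$. Let $(X_m)_{m\in\mathbf{N}}$ be an increasing sequence of subsets of $H$ such that $\mathcal{G}(X_m)\subseteq X_{m+1}$ for all $m$ and $\bigcup_m X_m=H$. Then $N^I\subseteq X_m$ for all $m$ large enough.
   Context: For a subset $X$ of a group, $\mathcal{G}(X)=X\cup\{1\}\cup\{x^{-1}: x\in X\}\cup\{xy : x,y\in X\}$. *)

theory Defs
  imports "HOL-Algebra.Algebra"
begin

definition comm_subgroup :: "('a, 'b) monoid_scheme \<Rightarrow> 'a set \<Rightarrow> 'a set \<Rightarrow> 'a set" where
  "comm_subgroup G A B = generate G (\<Union>a\<in>A. \<Union>b\<in>B.
      {a \<otimes>\<^bsub>G\<^esub> b \<otimes>\<^bsub>G\<^esub> inv\<^bsub>G\<^esub> a \<otimes>\<^bsub>G\<^esub> inv\<^bsub>G\<^esub> b})"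

fun lower_central :: "('a, 'b) monoid_scheme \<Rightarrow> nat \<Rightarrow> 'a set" where
  "lower_central G 0 = carrier G"
| "lower_central G (Suc k) = comm_subgroup G (lower_central G k) (carrier G)"

text \<open>The last term of the lower central series; for a finite group the series is
  decreasing and stabilises, so the last term is the intersection of all terms.\<close>
definition lcs_last :: "('a, 'b) monoid_scheme \<Rightarrow> 'a set" where
  "lcs_last G = (\<Inter>k. lower_central G k)"

definition gstep :: "('a, 'b) monoid_scheme \<Rightarrow> 'a set \<Rightarrow> 'a set" where
  "gstep K A = A \<union> {\<one>\<^bsub>K\<^esub>} \<union> (\<lambda>x. inv\<^bsub>K\<^esub> x) ` A
      \<union> (\<lambda>(x, y). x \<otimes>\<^bsub>K\<^esub> y) ` (Sigma A (\<lambda>_. A))"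

end

theory Submission
  imports Defs "HOL-Library.Nat_Bijection"
begin


fun cp :: "('a, 'b) monoid_scheme \<Rightarrow> ('a \<times> 'a) list \<Rightarrow> 'a" where
  "cp G [] = \<one>\<^bsub>G\<^esub>"
| "cp G ((c,g)#ps) = (c \<otimes>\<^bsub>G\<^esub> g \<otimes>\<^bsub>G\<^esub> inv\<^bsub>G\<^esub> c \<otimes>\<^bsub>G\<^esub> inv\<^bsub>G\<^esub> g) \<otimes>\<^bsub>G\<^esub> cp G ps"

definition RepS :: "('a, 'b) monoid_scheme \<Rightarrow> 'a set \<Rightarrow> 'a list \<Rightarrow> 'a set" where
  "RepS G Nn gs = (\<lambda>cs. cp G (zip cs gs)) ` {cs. length cs = length gs \<and> set cs \<subseteq> Nn}"

context group begin

lemma cp_carrier: "(\<forall>p\<in>set ps. fst p \<in> carrier G \<and> snd p \<in> carrier G) \<Longrightarrow> cp G ps \<in> carrier G"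
  by (induction ps) auto

lemma cp_append:
  assumes "\<forall>p\<in>set ps. fst p \<in> carrier G \<and> snd p \<in> carrier G"
    and "\<forall>p\<in>set qs. fst p \<in> carrier G \<and> snd p \<in> carrier G"
  shows "cp G (ps @ qs) = cp G ps \<otimes> cp G qs"
  using assms
proof (induction ps)
  case Nil then show ?case using cp_carrier by simp
next
  case (Cons p ps)
  obtain c g where p: "p = (c,g)" by (cases p)
  show ?case using Cons cp_carrier by (simp add: p m_assoc)
qed

lemma cp_ones: "set gs \<subseteq> carrier G \<Longrightarrow> cp G (zip (replicate (length gs) \<one>) gs) = \<one>"
  by (induction gs) auto

lemma canc1: "x \<in> carrier G \<Longrightarrow> y \<in> carrier G \<Longrightarrow> x \<otimes> (inv x \<otimes> y) = y"
  by (simp add: m_assoc[symmetric])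
lemma canc2: "x \<in> carrier G \<Longrightarrow> y \<in> carrier G \<Longrightarrow> inv x \<otimes> (x \<otimes> y) = y"
  by (simp add: m_assoc[symmetric])

lemma comm_inv_id:
  assumes "c \<in> carrier G" "g \<in> carrier G"
  defines "x \<equiv> inv c \<otimes> g \<otimes> c \<otimes> inv g"
  shows "inv (c \<otimes> g \<otimes> inv c \<otimes> inv g) = (c \<otimes> x \<otimes> inv c \<otimes> inv x) \<otimes> x"
  using assms by (simp add: m_assoc inv_mult_group canc1 canc2)


lemma zip_carrier:
  assumes "set cs \<subseteq> carrier G" "set gs \<subseteq> carrier G"
  shows "\<forall>p\<in>set (zip cs gs). fst p \<in> carrier G \<and> snd p \<in> carrier G"
  using assms by (auto dest: set_zip_leftD set_zip_rightD)

lemma rep_mult: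
  assumes sub: "Nn \<subseteq> carrier G" and a: "set a \<subseteq> carrier G" and b: "set b \<subseteq> carrier G"
    and x: "x \<in> RepS G Nn a" and y: "y \<in> RepS G Nn b"
  shows "x \<otimes> y \<in> RepS G Nn (a @ b)"
proof -
  obtain ca where ca: "length ca = length a" "set ca \<subseteq> Nn" "x = cp G (zip ca a)"
    using x unfolding RepS_def by auto
  obtain cb where cb: "length cb = length b" "set cb \<subseteq> Nn" "y = cp G (zip cb b)"
    using y unfolding RepS_def by auto
  have "cp G (zip (ca @ cb) (a @ b)) = x \<otimes> y"
  proof -
    have "set ca \<subseteq> carrier G" "set cb \<subseteq> carrier G" using ca cb sub by auto
    then show ?thesis using cp_append[OF zip_carrier[of ca a] zip_carrier[of cb b]] a b ca cb by simp
  qed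
  moreover have "length (ca @ cb) = length (a @ b)" "set (ca @ cb) \<subseteq> Nn" using ca cb by auto
  ultimately show ?thesis unfolding RepS_def by (intro image_eqI[where x="ca @ cb"]) auto
qed

lemma rep_one:
  assumes "\<one> \<in> Nn" "set gs \<subseteq> carrier G" shows "\<one> \<in> RepS G Nn gs"
proof -
  have "cp G (zip (replicate (length gs) \<one>) gs) = \<one>" using assms cp_ones by blast
  moreover have "set (replicate (length gs) \<one>) \<subseteq> Nn" using assms by auto
  ultimately show ?thesis unfolding RepS_def
    by (intro image_eqI[where x="replicate (length gs) \<one>"]) auto
qed

lemma rep_carrier: "Nn \<subseteq> carrier G \<Longrightarrow> set gs \<subseteq> carrier G \<Longrightarrow> RepS G Nn gs \<subseteq> carrier G"
proof
  fix x assume "Nn \<subseteq> carrier G" "set gs \<subseteq> carrier G" "x \<in> RepS G Nn gs"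
  then obtain cs where "set cs \<subseteq> carrier G" "x = cp G (zip cs gs)" unfolding RepS_def by auto
  then show "x \<in> carrier G" using cp_carrier[OF zip_carrier] \<open>set gs \<subseteq> carrier G\<close> by simp
qed

lemma rep_left:
  assumes "Nn \<subseteq> carrier G" "\<one> \<in> Nn" "set a \<subseteq> carrier G" "set b \<subseteq> carrier G"
  shows "RepS G Nn a \<subseteq> RepS G Nn (a @ b)"
proof
  fix x assume x: "x \<in> RepS G Nn a"
  have "x \<otimes> \<one> \<in> RepS G Nn (a @ b)" using rep_mult[OF assms(1,3,4) x rep_one[OF assms(2,4)]] .
  then show "x \<in> RepS G Nn (a @ b)" using x rep_carrier[OF assms(1,3)] by auto
qed

lemma rep_right:
  assumes "Nn \<subseteq> carrier G" "\<one> \<in> Nn" "set a \<subseteq> carrier G" "set b \<subseteq> carrier G"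
  shows "RepS G Nn b \<subseteq> RepS G Nn (a @ b)"
proof
  fix x assume x: "x \<in> RepS G Nn b"
  have "\<one> \<otimes> x \<in> RepS G Nn (a @ b)" using rep_mult[OF assms(1,3,4) rep_one[OF assms(2,3)] x] .
  then show "x \<in> RepS G Nn (a @ b)" using x rep_carrier[OF assms(1,4)] by auto
qed

lemma rep_comm:
  assumes "c \<in> Nn" "g \<in> carrier G" "Nn \<subseteq> carrier G"
  shows "c \<otimes> g \<otimes> inv c \<otimes> inv g \<in> RepS G Nn [g]"
proof -
  have "cp G (zip [c] [g]) = c \<otimes> g \<otimes> inv c \<otimes> inv g" using assms by auto
  then show ?thesis unfolding RepS_def using assms(1)
    by (intro image_eqI[where x="[c]"]) auto
qed

lemma rep_exists:
  assumes sg: "subgroup Nn G" and eq: "Nn = comm_subgroup G Nn (carrier G)" and fin: "finite Nn"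
  shows "\<exists>gs. set gs \<subseteq> carrier G \<and> Nn \<subseteq> RepS G Nn gs"
proof -
  have sub: "Nn \<subseteq> carrier G" using subgroup.subset[OF sg] .
  have oneN: "\<one> \<in> Nn" using subgroup.one_closed[OF sg] .
  have invN: "inv c \<in> Nn" if "c \<in> Nn" for c using subgroup.m_inv_closed[OF sg that] .
  define M where "M = (\<Union>gs\<in>{gs. set gs \<subseteq> carrier G}. RepS G Nn gs)"
  have Mmult: "x \<otimes> y \<in> M" if xM: "x \<in> M" and yM: "y \<in> M" for x y
  proof -
    obtain a where a: "set a \<subseteq> carrier G" "x \<in> RepS G Nn a" using xM unfolding M_def by auto
    obtain b where b: "set b \<subseteq> carrier G" "y \<in> RepS G Nn b" using yM unfolding M_def by auto
    have "x \<otimes> y \<in> RepS G Nn (a @ b)" using rep_mult[OF sub a(1) b(1) a(2) b(2)] by assumption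
    moreover have "set (a @ b) \<subseteq> carrier G" using a b by simp
    ultimately show ?thesis unfolding M_def by (intro UN_I[where a="a @ b"]) simp_all
  qed
  have gen: "h \<in> M" if "h \<in> generate G (\<Union>a\<in>Nn. \<Union>b\<in>carrier G. {a \<otimes> b \<otimes> inv a \<otimes> inv b})" for h
    using that
  proof (induction rule: generate.induct)
    case one
    then show ?case unfolding M_def using rep_one[OF oneN, where gs="[]"] by (intro UN_I[where a="[]"]) simp_all
  next
    case (incl h)
    then obtain c g where "c \<in> Nn" "g \<in> carrier G" "h = c \<otimes> g \<otimes> inv c \<otimes> inv g" by auto
    then show ?case unfolding M_def using rep_comm[OF _ _ sub] by (intro UN_I[where a="[g]"]) simp_all
  next
    case (inv h)
    then obtain c g where cg: "c \<in> Nn" "g \<in> carrier G" and h: "h = c \<otimes> g \<otimes> inv c \<otimes> inv g" by auto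
    have cc: "c \<in> carrier G" using cg sub by auto
    define x where "x = inv c \<otimes> g \<otimes> c \<otimes> inv g"
    have xc: "x \<in> carrier G" using cc cg by (simp add: x_def)
    have "inv h = (c \<otimes> x \<otimes> inv c \<otimes> inv x) \<otimes> x" using comm_inv_id[OF cc cg(2)] h x_def by simp
    moreover have "c \<otimes> x \<otimes> inv c \<otimes> inv x \<in> M" unfolding M_def using rep_comm[OF cg(1) xc sub] xc by (intro UN_I[where a="[x]"]) simp_all
    moreover have "x \<in> M" unfolding M_def using rep_comm[OF invN[OF cg(1)] cg(2) sub] cg cc
      by (intro UN_I[where a="[g]"]) (simp_all add: x_def)
    ultimately show ?case using Mmult by simp
  next
    case (eng h1 h2)
    then show ?case using Mmult by simp
  qed
  have NM: "Nn \<subseteq> M"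
  proof
    fix n assume "n \<in> Nn"
    then have "n \<in> comm_subgroup G Nn (carrier G)" by (simp only: eq[symmetric])
    then show "n \<in> M" using gen unfolding comm_subgroup_def by blast
  qed
  have "\<exists>gs. set gs \<subseteq> carrier G \<and> T \<subseteq> RepS G Nn gs" if "finite T" "T \<subseteq> Nn" for T
    using that
  proof (induction T rule: finite_induct)
    case empty have "set [] \<subseteq> carrier G \<and> {} \<subseteq> RepS G Nn []" by simp
    then show ?case by blast
  next
    case (insert n T)
    then obtain gs where gs: "set gs \<subseteq> carrier G" "T \<subseteq> RepS G Nn gs" by auto
    obtain hs where hs: "set hs \<subseteq> carrier G" "n \<in> RepS G Nn hs" using insert NM unfolding M_def by auto
    show ?case
      using gs hs rep_left[OF sub oneN gs(1) hs(1)] rep_right[OF sub oneN gs(1) hs(1)]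
      by (intro exI[of _ "gs @ hs"]) auto
  qed
  then show ?thesis using fin by blast
qed

lemma lc_sub: "lower_central G k \<subseteq> carrier G"
proof (induction k)
  case 0 then show ?case by simp
next
  case (Suc k)
  have "(\<Union>a\<in>lower_central G k. \<Union>b\<in>carrier G. {a \<otimes> b \<otimes> inv a \<otimes> inv b}) \<subseteq> carrier G"
    using Suc by auto
  then show ?case by (simp add: comm_subgroup_def generate_incl)
qed

lemma lc_dec: "lower_central G (Suc k) \<subseteq> lower_central G k"
proof (induction k)
  case 0 then show ?case using lc_sub[of 1] by simp
next
  case (Suc k)
  have "(\<Union>a\<in>lower_central G (Suc k). \<Union>b\<in>carrier G. {a \<otimes> b \<otimes> inv a \<otimes> inv b})
     \<subseteq> (\<Union>a\<in>lower_central G k. \<Union>b\<in>carrier G. {a \<otimes> b \<otimes> inv a \<otimes> inv b})"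
    using Suc by auto
  then show ?case by (simp add: comm_subgroup_def mono_generate)
qed

lemma lc_stab:
  assumes fin: "finite (carrier G)"
  shows "\<exists>K. lower_central G (Suc K) = lower_central G K"
proof -
  define f where "f k = card (lower_central G k)" for k
  have "range f \<subseteq> {..card (carrier G)}"
    using lc_sub card_mono[OF fin] by (auto simp: f_def)
  hence finr: "finite (range f)" by (rule finite_subset) simp
  obtain K where K: "f K = Min (range f)"
    using Min_in[OF finr] by auto
  have "f K \<le> f (Suc K)" using K finr by simp
  moreover have fs: "finite (lower_central G K)" using lc_sub fin finite_subset by blast
  moreover have "f (Suc K) \<le> f K" unfolding f_def using card_mono[OF fs lc_dec[of K]] .
  ultimately have "card (lower_central G (Suc K)) = card (lower_central G K)" by (simp add: f_def)
  then have "lower_central G (Suc K) = lower_central G K" by (rule card_subset_eq[OF fs lc_dec[of K]])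
  then show ?thesis ..
qed

lemma lcs_last_eq:
  assumes fin: "finite (carrier G)"
  shows "lcs_last G = comm_subgroup G (lcs_last G) (carrier G)"
proof -
  obtain K where K: "lower_central G (Suc K) = lower_central G K" using lc_stab[OF fin] by blast
  have up: "lower_central G k = lower_central G K" if "K \<le> k" for k
    using that
  proof (induction k rule: dec_induct)
    case base then show ?case by simp
  next
    case (step k)
    have "lower_central G (Suc k) = comm_subgroup G (lower_central G k) (carrier G)" by simp
    also have "\<dots> = comm_subgroup G (lower_central G K) (carrier G)" using step.IH by simp
    also have "\<dots> = lower_central G (Suc K)" by simp
    finally show ?case using K by (rule trans)
  qed
  have dn: "lower_central G K \<subseteq> lower_central G k" for k
  proof (cases "K \<le> k")
    case True then show ?thesis using up[OF True] by simp
  next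
    case False
    have "lower_central G (k + j) \<subseteq> lower_central G k" for j
    proof (induction j)
      case 0 then show ?case by simp
    next
      case (Suc j) then show ?case using lc_dec[of "k+j"] by (metis add_Suc_right order_trans)
    qed
    from this[of "K - k"] show ?thesis using False by simp
  qed
  have eq: "lcs_last G = lower_central G K"
    unfolding lcs_last_def
  proof (rule antisym)
    show "(\<Inter>k. lower_central G k) \<subseteq> lower_central G K" by (rule Inter_lower) simp
    show "lower_central G K \<subseteq> (\<Inter>k. lower_central G k)" using dn by (simp add: INF_greatest)
  qed
  have "comm_subgroup G (lcs_last G) (carrier G) = lower_central G (Suc K)" using eq by simp
  then show ?thesis using K eq by (simp only:)
qed

end


locale mt =
  fixes G :: "('a, 'b) monoid_scheme" and I :: "'i set" and S :: "nat \<Rightarrow> ('i \<Rightarrow> 'a) set"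
  assumes grp: "group G" and fin: "finite (carrier G)"
    and Ssub: "\<And>m. S m \<subseteq> carrier (product_group I (\<lambda>_. G))"
    and Smono: "\<And>m. S m \<subseteq> S (Suc m)"
    and Sstep: "\<And>m. gstep (product_group I (\<lambda>_. G)) (S m) \<subseteq> S (Suc m)"
    and Sunion: "(\<Union>m. S m) = carrier (product_group I (\<lambda>_. G))"
begin

abbreviation "H \<equiv> product_group I (\<lambda>_. G)"
abbreviation "N \<equiv> lcs_last G"

lemma grpH: "group H" using grp by simp

lemma S_le: "x \<in> S m \<Longrightarrow> m \<le> m' \<Longrightarrow> x \<in> S m'"
  using lift_Suc_mono_le[of S, OF Smono] by blast

lemma S_mult: "x \<in> S m \<Longrightarrow> y \<in> S m \<Longrightarrow> x \<otimes>\<^bsub>H\<^esub> y \<in> S (Suc m)"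
  using Sstep[of m] unfolding gstep_def by blast

lemma S_inv: "x \<in> S m \<Longrightarrow> inv\<^bsub>H\<^esub> x \<in> S (Suc m)"
  using Sstep[of m] unfolding gstep_def by blast

lemma S_one: "\<one>\<^bsub>H\<^esub> \<in> S (Suc m)"
  using Sstep[of m] unfolding gstep_def by blast

lemma S_fin: "finite T \<Longrightarrow> T \<subseteq> carrier H \<Longrightarrow> \<exists>m. T \<subseteq> S m"
proof (induction T rule: finite_induct)
  case empty then show ?case by simp
next
  case (insert x T)
  then obtain m where m: "T \<subseteq> S m" by auto
  obtain m' where m': "x \<in> S m'" using insert(4) Sunion by blast
  have "insert x T \<subseteq> S (max m m')" using m m' S_le by (meson insert_subset max.cobounded1 max.cobounded2 subset_iff)
  then show ?case by blast
qed

lemma N_sub: "N \<subseteq> carrier G"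
  unfolding lcs_last_def by (metis INT_lower UNIV_I lower_central.simps(1))

lemma N_eq: "N = comm_subgroup G N (carrier G)"
  using group.lcs_last_eq[OF grp fin] .

lemma N_subgroup: "subgroup N G"
proof -
  have "(\<Union>a\<in>N. \<Union>b\<in>carrier G. {a \<otimes>\<^bsub>G\<^esub> b \<otimes>\<^bsub>G\<^esub> inv\<^bsub>G\<^esub> a \<otimes>\<^bsub>G\<^esub> inv\<^bsub>G\<^esub> b}) \<subseteq> carrier G"
    using N_sub grp by (auto intro!: group.subgroupE monoid.m_closed group.is_monoid group.inv_closed)
  then have "subgroup (comm_subgroup G N (carrier G)) G"
    unfolding comm_subgroup_def by (rule group.generate_is_subgroup[OF grp])
  then show ?thesis by (simp only: N_eq[symmetric])
qed

lemma N_one: "\<one>\<^bsub>G\<^esub> \<in> N" using subgroup.one_closed[OF N_subgroup] .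
lemma N_fin: "finite N" using N_sub fin finite_subset by blast

definition Nb :: "'i set \<Rightarrow> nat \<Rightarrow> bool" where
  "Nb A p \<longleftrightarrow> (\<Pi>\<^sub>E i\<in>I. if i \<in> A then N else {\<one>\<^bsub>G\<^esub>}) \<subseteq> S p"

definition good :: "'i set \<Rightarrow> bool" where
  "good A \<longleftrightarrow> (\<exists>p. Nb A p)"

lemma Nb_mono_set: "Nb A p \<Longrightarrow> B \<inter> I \<subseteq> A \<Longrightarrow> Nb B p"
  unfolding Nb_def
  by (rule order_trans[rotated], assumption, rule PiE_mono) (use N_one in auto)

lemma Nb_mono_lvl: "Nb A p \<Longrightarrow> p \<le> q \<Longrightarrow> Nb A q"
  unfolding Nb_def using S_le by blast

lemma Nb_union:
  assumes A: "Nb A p" and B: "Nb B p" shows "Nb (A \<union> B) (Suc p)"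
  unfolding Nb_def
proof
  fix y assume y: "y \<in> (\<Pi>\<^sub>E i\<in>I. if i \<in> A \<union> B then N else {\<one>\<^bsub>G\<^esub>})"
  define yA where "yA = (\<lambda>i\<in>I. if i \<in> A then y i else \<one>\<^bsub>G\<^esub>)"
  define yB where "yB = (\<lambda>i\<in>I. if i \<in> A then \<one>\<^bsub>G\<^esub> else y i)"
  have yA: "yA \<in> (\<Pi>\<^sub>E i\<in>I. if i \<in> A then N else {\<one>\<^bsub>G\<^esub>})"
    using y N_one by (auto simp: yA_def PiE_iff)
  have yB: "yB \<in> (\<Pi>\<^sub>E i\<in>I. if i \<in> B then N else {\<one>\<^bsub>G\<^esub>})"
    using y N_one by (auto simp: yB_def PiE_iff)
  have yc: "y i \<in> carrier G" if "i \<in> I" for i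
  proof -
    have "y i \<in> (if i \<in> A \<union> B then N else {\<one>\<^bsub>G\<^esub>})" using PiE_mem[OF y that] .
    then show ?thesis using N_sub N_one by (auto split: if_splits)
  qed
  have "yA \<otimes>\<^bsub>H\<^esub> yB = y"
  proof (rule PiE_ext[where k=I and s="\<lambda>_. UNIV"])
    show "yA \<otimes>\<^bsub>H\<^esub> yB \<in> (\<Pi>\<^sub>E i\<in>I. UNIV)" by simp
    show "y \<in> (\<Pi>\<^sub>E i\<in>I. UNIV)" using y by (auto simp: PiE_iff)
    fix i assume "i \<in> I"
    then show "(yA \<otimes>\<^bsub>H\<^esub> yB) i = y i"
      using yc[of i] grp by (simp add: yA_def yB_def group.is_monoid monoid.l_one monoid.r_one)
  qed
  moreover have "yA \<otimes>\<^bsub>H\<^esub> yB \<in> S (Suc p)"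
    using A B yA yB S_mult unfolding Nb_def by blast
  ultimately show "y \<in> S (Suc p)" by simp
qed

lemma good_union: "good A \<Longrightarrow> good B \<Longrightarrow> good (A \<union> B)"
  unfolding good_def
proof (elim exE)
  fix p q assume "Nb A p" "Nb B q"
  then have "Nb A (max p q)" "Nb B (max p q)" using Nb_mono_lvl by auto
  then show "\<exists>p. Nb (A \<union> B) p" using Nb_union by blast
qed

lemma good_empty: "good {}"
proof -
  have "(\<Pi>\<^sub>E i\<in>I. if i \<in> {} then N else {\<one>\<^bsub>G\<^esub>}) = {\<one>\<^bsub>H\<^esub>}"
    by (simp add: PiE_eq_singleton)
  then have "Nb {} 1" unfolding Nb_def using S_one[of 0] by simp
  then show ?thesis unfolding good_def by blast
qed

lemma good_Union: "finite F \<Longrightarrow> (\<forall>A\<in>F. good A) \<Longrightarrow> good (\<Union>F)"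
  by (induction F rule: finite_induct) (auto intro: good_union good_empty)

lemma good_mono: "good A \<Longrightarrow> B \<inter> I \<subseteq> A \<Longrightarrow> good B"
  unfolding good_def using Nb_mono_set by blast

definition sel_e :: "'i set \<Rightarrow> 'a \<Rightarrow> ('i \<Rightarrow> 'a)" where
  "sel_e R g = (\<lambda>i\<in>I. if i \<in> R then g else \<one>\<^bsub>G\<^esub>)"

lemma sel_e_carrier: "g \<in> carrier G \<Longrightarrow> sel_e R g \<in> carrier H"
  using grp by (auto simp: sel_e_def PiE_iff group.is_monoid monoid.one_closed)

lemma sel_bound: "\<exists>s. \<forall>g\<in>carrier G. sel_e R g \<in> S s"
proof -
  have "finite (sel_e R ` carrier G)" using fin by simp
  moreover have "sel_e R ` carrier G \<subseteq> carrier H" using sel_e_carrier by auto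
  ultimately obtain s where "sel_e R ` carrier G \<subseteq> S s" using S_fin by blast
  then show ?thesis by blast
qed

lemma PiE_N_carrier:
  assumes y: "y \<in> (\<Pi>\<^sub>E i\<in>I. if i \<in> A then N else {\<one>\<^bsub>G\<^esub>})"
  shows "y \<in> carrier H" and "\<And>i. i \<in> I \<Longrightarrow> y i \<in> N"
proof -
  show yN: "y i \<in> N" if "i \<in> I" for i
  proof -
    have "y i \<in> (if i \<in> A then N else {\<one>\<^bsub>G\<^esub>})" using PiE_mem[OF y that] .
    then show ?thesis using N_one by (auto split: if_splits)
  qed
  show "y \<in> carrier H" using y yN N_sub by (auto simp: PiE_iff)
qed

lemma split_lemma:
  assumes ng: "\<not> good R"
  shows "\<exists>F. F \<subseteq> R \<and> \<not> good F \<and> \<not> Nb (R - F) m"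
proof (rule ccontr)
  assume h: "\<not> (\<exists>F. F \<subseteq> R \<and> \<not> good F \<and> \<not> Nb (R - F) m)"
  interpret HG: group H by (rule grpH)
  obtain s where s: "\<forall>g\<in>carrier G. sel_e R g \<in> S s" using sel_bound by blast
  have "Nb R (Suc (max m s))" unfolding Nb_def
  proof
    fix y assume y: "y \<in> (\<Pi>\<^sub>E i\<in>I. if i \<in> R then N else {\<one>\<^bsub>G\<^esub>})"
    have yc: "y i \<in> N" if "i \<in> I" for i using PiE_N_carrier(2)[OF y that] .
    have yH: "y \<in> carrier H" using PiE_N_carrier(1)[OF y] .
    define fib where "fib n = {i\<in>R. y i = n}" for n
    have "\<exists>n\<in>N. \<not> good (fib n)"
    proof (rule ccontr)
      assume a: "\<not> (\<exists>n\<in>N. \<not> good (fib n))"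
      have allg: "\<forall>A\<in>fib ` N. good A"
      proof
        fix A assume "A \<in> fib ` N"
        then obtain n where "n \<in> N" "A = fib n" by blast
        then show "good A" using a by blast
      qed
      have g: "good (\<Union>(fib ` N))" using good_Union[OF _ allg] N_fin by simp
      have sub: "R \<inter> I \<subseteq> \<Union>(fib ` N)"
      proof
        fix i assume "i \<in> R \<inter> I"
        then have "i \<in> fib (y i)" "y i \<in> N" using yc unfolding fib_def by auto
        then show "i \<in> \<Union>(fib ` N)" by blast
      qed
      have "good R" using good_mono[OF g sub] .
      then show False using ng by simp
    qed
    then obtain n where n: "n \<in> N" and nF: "\<not> good (fib n)" by blast
    define F where "F = {i\<in>R. y i = n}"
    have "F \<subseteq> R" "\<not> good F" using nF unfolding F_def fib_def by auto
    then have NbF: "Nb (R - F) m" using h by blast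
    have nc: "n \<in> carrier G" using n N_sub by auto
    define e where "e = sel_e R n"
    have ec: "e \<in> carrier H" unfolding e_def using sel_e_carrier[OF nc] .
    define z where "z = y \<otimes>\<^bsub>H\<^esub> inv\<^bsub>H\<^esub> e"
    have z: "z = (\<lambda>i\<in>I. y i \<otimes>\<^bsub>G\<^esub> inv\<^bsub>G\<^esub> (e i))"
      unfolding z_def using ec grp by simp (intro restrict_ext, simp)
    have zN: "z \<in> (\<Pi>\<^sub>E i\<in>I. if i \<in> R - F then N else {\<one>\<^bsub>G\<^esub>})"
    proof -
      have "y i \<otimes>\<^bsub>G\<^esub> inv\<^bsub>G\<^esub> (e i) \<in> (if i \<in> R - F then N else {\<one>\<^bsub>G\<^esub>})" if i: "i \<in> I" for i
      proof (cases "i \<in> R")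
        case True
        then have ei: "e i = n" using i by (simp add: e_def sel_e_def)
        show ?thesis
        proof (cases "y i = n")
          case True
          then show ?thesis using ei nc grp \<open>i \<in> R\<close> by (simp add: F_def group.r_inv)
        next
          case False
          have "y i \<otimes>\<^bsub>G\<^esub> inv\<^bsub>G\<^esub> n \<in> N"
            using yc[OF i] n N_subgroup by (simp add: subgroup.m_closed subgroup.m_inv_closed)
          then show ?thesis using ei False \<open>i \<in> R\<close> by (simp add: F_def)
        qed
      next
        case False
        then have "e i = \<one>\<^bsub>G\<^esub>" "y i = \<one>\<^bsub>G\<^esub>" using i PiE_mem[OF y i] by (auto simp: e_def sel_e_def)
        then show ?thesis using False grp by (simp add: group.is_monoid monoid.r_one monoid.inv_one)
      qed
      then show ?thesis unfolding z by (auto simp: PiE_iff)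
    qed
    have zS: "z \<in> S (max m s)" using NbF zN S_le unfolding Nb_def by (meson max.cobounded1 subsetD)
    have eS: "e \<in> S (max m s)" using s nc S_le unfolding e_def by (meson max.cobounded2)
    have "z \<otimes>\<^bsub>H\<^esub> e \<in> S (Suc (max m s))" using S_mult[OF zS eS] .
    moreover have "z \<otimes>\<^bsub>H\<^esub> e = y" unfolding z_def
      by (simp only: HG.m_assoc[OF yH HG.inv_closed[OF ec] ec] HG.l_inv[OF ec] HG.r_one[OF yH])
    ultimately show "y \<in> S (Suc (max m s))" by simp
  qed
  then show False using ng unfolding good_def by blast
qed

lemma map_zip_pt: "map (\<lambda>x. (fst x i, snd x i)) (zip xs ys) = zip (map (\<lambda>a. a i) xs) (map (\<lambda>b. b i) ys)"
  by (simp add: zip_map_map split_def)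

lemma cpH_level:
  "\<forall>x\<in>set ps. fst x \<in> S p \<and> snd x \<in> S p \<Longrightarrow> cp H ps \<in> S (p + 4 + length ps)"
proof (induction ps)
  case Nil
  have "cp H [] = \<one>\<^bsub>H\<^esub>" by (rule cp.simps(1))
  then show ?case by (simp only:) (rule S_le[OF S_one[of "p+3"]], simp)
next
  case (Cons x ps)
  obtain a b where x: "x = (a, b)" by (cases x)
  have a: "a \<in> S p" and b: "b \<in> S p" using Cons.prems x by auto
  have ab: "a \<otimes>\<^bsub>H\<^esub> b \<in> S (Suc p)" using S_mult[OF a b] .
  have ia: "inv\<^bsub>H\<^esub> a \<in> S (Suc p)" using S_inv[OF a] .
  have ib: "inv\<^bsub>H\<^esub> b \<in> S (Suc (Suc p))" using S_le[OF S_inv[OF b]] by simp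
  have c2: "a \<otimes>\<^bsub>H\<^esub> b \<otimes>\<^bsub>H\<^esub> inv\<^bsub>H\<^esub> a \<in> S (Suc (Suc p))" using S_mult[OF ab ia] .
  have c3: "a \<otimes>\<^bsub>H\<^esub> b \<otimes>\<^bsub>H\<^esub> inv\<^bsub>H\<^esub> a \<otimes>\<^bsub>H\<^esub> inv\<^bsub>H\<^esub> b \<in> S (Suc (Suc (Suc p)))"
    using S_mult[OF c2 ib] .
  have c3': "a \<otimes>\<^bsub>H\<^esub> b \<otimes>\<^bsub>H\<^esub> inv\<^bsub>H\<^esub> a \<otimes>\<^bsub>H\<^esub> inv\<^bsub>H\<^esub> b \<in> S (p + 4 + length ps)"
    using S_le[OF c3] by simp
  have r: "cp H ps \<in> S (p + 4 + length ps)" using Cons by simp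
  have "cp H (x # ps) \<in> S (Suc (p + 4 + length ps))" unfolding x using S_mult[OF c3' r] by simp
  then show ?case by simp
qed

lemma cpH_pt:
  "\<forall>x\<in>set ps. fst x \<in> carrier H \<and> snd x \<in> carrier H \<Longrightarrow> i \<in> I \<Longrightarrow>
    cp H ps i = cp G (map (\<lambda>x. (fst x i, snd x i)) ps)"
proof (induction ps)
  case Nil then show ?case by simp
next
  case (Cons x ps)
  obtain a b where x: "x = (a, b)" by (cases x)
  have a: "a \<in> carrier H" and b: "b \<in> carrier H" using Cons.prems x by auto
  have ai: "a i \<in> carrier G" "b i \<in> carrier G" using a b Cons.prems(2) by (auto simp: PiE_iff)
  have "cp H (x # ps) i = (a i \<otimes>\<^bsub>G\<^esub> b i \<otimes>\<^bsub>G\<^esub> inv\<^bsub>G\<^esub> a i \<otimes>\<^bsub>G\<^esub> inv\<^bsub>G\<^esub> b i) \<otimes>\<^bsub>G\<^esub> cp H ps i"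
    using a b Cons.prems(2) grp unfolding x by simp
  also have "cp H ps i = cp G (map (\<lambda>x. (fst x i, snd x i)) ps)" using Cons by simp
  finally show ?case unfolding x by simp
qed

lemma cp_one_right: "set cs \<subseteq> carrier G \<Longrightarrow> cp G (zip cs (replicate n \<one>\<^bsub>G\<^esub>)) = \<one>\<^bsub>G\<^esub>"
proof (induction cs arbitrary: n)
  case Nil then show ?case by simp
next
  case (Cons c cs)
  then show ?case
  proof (cases n)
    case 0 then show ?thesis by simp
  next
    case (Suc n')
    have "c \<in> carrier G" "set cs \<subseteq> carrier G" using Cons.prems by auto
    then show ?thesis using Cons.IH[of n'] Suc grp
      by (simp add: group.is_monoid monoid.r_one monoid.l_one group.r_inv monoid.inv_one)
  qed
qed

lemma dsel:
  fixes E :: "nat \<Rightarrow> 'i set"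
  assumes ng: "\<And>j. \<not> good (E j)" and disj: "\<And>j j'. j \<noteq> j' \<Longrightarrow> E j \<inter> E j' = {}"
  shows False
proof -
  obtain gs where gs: "set gs \<subseteq> carrier G" "N \<subseteq> RepS G N gs"
    using group.rep_exists[OF grp N_subgroup N_eq N_fin] by blast
  define L where "L = length gs"
  have "\<forall>j. \<exists>s. \<forall>g\<in>carrier G. sel_e (E j) g \<in> S s" using sel_bound by blast
  then obtain sel where sel: "\<And>j g. g \<in> carrier G \<Longrightarrow> sel_e (E j) g \<in> S (sel j)" by metis
  define Bnd where "Bnd j = max j (sel j) + 4 + L" for j
  have "\<forall>j. \<exists>y. y \<in> (\<Pi>\<^sub>E i\<in>I. if i \<in> E j then N else {\<one>\<^bsub>G\<^esub>}) \<and> y \<notin> S (Bnd j)"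
    using ng unfolding good_def Nb_def by blast
  then obtain yf where yf: "\<And>j. yf j \<in> (\<Pi>\<^sub>E i\<in>I. if i \<in> E j then N else {\<one>\<^bsub>G\<^esub>})"
    and yfn: "\<And>j. yf j \<notin> S (Bnd j)" by metis
  define w where "w i = (if \<exists>j. i \<in> E j then yf (SOME j. i \<in> E j) i else \<one>\<^bsub>G\<^esub>)" for i
  have wN: "w i \<in> N" if "i \<in> I" for i
    using PiE_N_carrier(2)[OF yf that] N_one unfolding w_def by auto
  have "\<forall>i\<in>I. \<exists>cs. length cs = L \<and> set cs \<subseteq> N \<and> w i = cp G (zip cs gs)"
  proof
    fix i assume "i \<in> I"
    then have "w i \<in> RepS G N gs" using wN gs(2) by blast
    then show "\<exists>cs. length cs = L \<and> set cs \<subseteq> N \<and> w i = cp G (zip cs gs)"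
      unfolding RepS_def L_def by blast
  qed
  then obtain csf where csf: "\<And>i. i \<in> I \<Longrightarrow> length (csf i) = L \<and> set (csf i) \<subseteq> N \<and> w i = cp G (zip (csf i) gs)"
    by metis
  define Z where "Z l = (\<lambda>i\<in>I. csf i ! l)" for l
  have Zc: "Z l \<in> carrier H" if "l < L" for l
  proof -
    have "csf i ! l \<in> carrier G" if "i \<in> I" for i
      using csf[OF that] \<open>l < L\<close> N_sub nth_mem by blast
    then show ?thesis by (simp add: Z_def)
  qed
  have "finite (Z ` {..<L})" by simp
  moreover have "Z ` {..<L} \<subseteq> carrier H" using Zc by auto
  ultimately obtain q where q: "Z ` {..<L} \<subseteq> S q" using S_fin by blast
  define p where "p = max q (sel q)"
  define ps where "ps = zip (map Z [0..<L]) (map (sel_e (E q)) gs)"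
  have lps: "length ps = L" by (simp add: ps_def L_def)
  have ps_S: "\<forall>x\<in>set ps. fst x \<in> S p \<and> snd x \<in> S p"
  proof
    fix x assume x: "x \<in> set ps"
    then have "fst x \<in> set (map Z [0..<L])" "snd x \<in> set (map (sel_e (E q)) gs)"
      unfolding ps_def by (metis prod.collapse set_zip_leftD, metis prod.collapse set_zip_rightD)
    then obtain l g where "l < L" "fst x = Z l" "g \<in> set gs" "snd x = sel_e (E q) g" by auto
    then show "fst x \<in> S p \<and> snd x \<in> S p"
      using q sel[of g q] gs(1) S_le unfolding p_def by (metis image_subset_iff lessThan_iff max.cobounded1 max.cobounded2 subsetD)
  qed
  have "cp H ps \<in> S (Bnd q)" using cpH_level[OF ps_S] lps by (simp add: Bnd_def p_def)
  moreover have "cp H ps = yf q"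
  proof (rule PiE_ext[where k=I and s="\<lambda>_. UNIV"])
    have ps_c: "\<forall>x\<in>set ps. fst x \<in> carrier H \<and> snd x \<in> carrier H" using ps_S Ssub by blast
    have "cp H ps \<in> carrier H" using group.cp_carrier[OF grpH ps_c] .
    then show "cp H ps \<in> (\<Pi>\<^sub>E i\<in>I. UNIV)" by (auto simp: PiE_iff)
    show "yf q \<in> (\<Pi>\<^sub>E i\<in>I. UNIV)" using yf[of q] by (auto simp: PiE_iff)
    fix i assume i: "i \<in> I"
    have "map (\<lambda>x. (fst x i, snd x i)) ps = zip (map (\<lambda>l. Z l i) [0..<L]) (map (\<lambda>g. sel_e (E q) g i) gs)"
      unfolding ps_def map_zip_pt by (simp add: map_map o_def)
    also have "map (\<lambda>l. Z l i) [0..<L] = csf i"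
    proof -
      have "map (\<lambda>l. Z l i) [0..<L] = map (\<lambda>l. csf i ! l) [0..<length (csf i)]"
        using csf[OF i] i by (simp add: Z_def)
      then show ?thesis by (simp add: map_nth)
    qed
    finally have mp: "map (\<lambda>x. (fst x i, snd x i)) ps = zip (csf i) (map (\<lambda>g. sel_e (E q) g i) gs)" .
    have cpi: "cp H ps i = cp G (zip (csf i) (map (\<lambda>g. sel_e (E q) g i) gs))"
      using cpH_pt[OF ps_c i] mp by simp
    show "cp H ps i = yf q i"
    proof (cases "i \<in> E q")
      case True
      have "map (\<lambda>g. sel_e (E q) g i) gs = gs" using True i by (simp add: sel_e_def)
      then have "cp H ps i = w i" using cpi csf[OF i] by simp
      moreover have "(SOME j. i \<in> E j) = q"
      proof -
        have "i \<in> E (SOME j. i \<in> E j)" using True by (rule someI)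
        then show ?thesis using True disj by blast
      qed
      ultimately show ?thesis using True unfolding w_def by auto
    next
      case False
      have "map (\<lambda>g. sel_e (E q) g i) gs = replicate L \<one>\<^bsub>G\<^esub>"
        using False i by (simp add: sel_e_def L_def map_replicate_const)
      then have "cp H ps i = \<one>\<^bsub>G\<^esub>" using cpi cp_one_right csf[OF i] N_sub by auto
      moreover have "yf q i = \<one>\<^bsub>G\<^esub>" using PiE_mem[OF yf[of q] i] False by simp
      ultimately show ?thesis by simp
    qed
  qed
  ultimately show False using yfn by simp
qed

lemma good_I: "good I"
proof (rule ccontr)
  assume nI: "\<not> good I"
  define r where "r = rec_nat I (\<lambda>k R. SOME F. F \<subseteq> R \<and> \<not> good F \<and> \<not> Nb (R - F) k)"
  have r0: "r 0 = I" by (simp add: r_def)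
  have rS: "r (Suc k) = (SOME F. F \<subseteq> r k \<and> \<not> good F \<and> \<not> Nb (r k - F) k)" for k
    by (simp add: r_def)
  have ng: "\<not> good (r k)" for k
  proof (induction k)
    case 0 show ?case using nI r0 by simp
  next
    case (Suc k)
    have "\<exists>F. F \<subseteq> r k \<and> \<not> good F \<and> \<not> Nb (r k - F) k" using split_lemma[OF Suc.IH] .
    from someI_ex[OF this] show ?case unfolding rS by blast
  qed
  have rprop: "r (Suc k) \<subseteq> r k \<and> \<not> Nb (r k - r (Suc k)) k" for k
  proof -
    have "\<exists>F. F \<subseteq> r k \<and> \<not> good F \<and> \<not> Nb (r k - F) k" using split_lemma[OF ng[of k]] .
    from someI_ex[OF this] show ?thesis unfolding rS by blast
  qed
  define D where "D k = r k - r (Suc k)" for k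
  have rdec: "r k' \<subseteq> r k" if "k \<le> k'" for k k'
    using lift_Suc_antimono_le[of r, OF _ that] rprop by blast
  have Ddisj: "D k \<inter> D k' = {}" if "k < k'" for k k'
  proof -
    have "D k' \<subseteq> r (Suc k)" using rdec[of "Suc k" k'] that unfolding D_def by auto
    then show ?thesis unfolding D_def by auto
  qed
  define E where "E j = (\<Union>i. D (prod_encode (j, i)))" for j
  have Edisj: "E j \<inter> E j' = {}" if "j \<noteq> j'" for j j'
  proof (rule ccontr)
    assume "E j \<inter> E j' \<noteq> {}"
    then obtain x i i' where x: "x \<in> D (prod_encode (j, i))" "x \<in> D (prod_encode (j', i'))"
      unfolding E_def by blast
    have ne: "prod_encode (j, i) \<noteq> prod_encode (j', i')" using that by simp
    show False
    proof (cases "prod_encode (j, i) < prod_encode (j', i')")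
      case True then show False using Ddisj[OF True] x by blast
    next
      case False
      then have "prod_encode (j', i') < prod_encode (j, i)" using ne by (metis linorder_neqE_nat)
      then show False using Ddisj x by blast
    qed
  qed
  have Eng: "\<not> good (E j)" for j
  proof
    assume "good (E j)"
    then obtain p where p: "Nb (E j) p" unfolding good_def by blast
    define k where "k = prod_encode (j, p)"
    have "D k \<inter> I \<subseteq> E j" unfolding E_def k_def by blast
    then have "Nb (D k) p" using Nb_mono_set[OF p] by blast
    moreover have "p \<le> k" unfolding k_def by (rule le_prod_encode_2)
    ultimately have "Nb (D k) k" using Nb_mono_lvl by blast
    then show False using rprop[of k] unfolding D_def by blast
  qed
  have "\<And>j j'. j \<noteq> j' \<Longrightarrow> E j \<inter> E j' = {}" using Edisj by blast
  then show False using dsel[of E] Eng by blast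
qed

end

theorem mainTheorem9:
  fixes G :: "('a, 'b) monoid_scheme" and I :: "'i set" and S :: "nat \<Rightarrow> ('i \<Rightarrow> 'a) set"
  assumes "group G" and "finite (carrier G)"
    and "\<And>m. S m \<subseteq> carrier (product_group I (\<lambda>_. G))"
    and "\<And>m. S m \<subseteq> S (Suc m)"
    and "\<And>m. gstep (product_group I (\<lambda>_. G)) (S m) \<subseteq> S (Suc m)"
    and "(\<Union>m. S m) = carrier (product_group I (\<lambda>_. G))"
  shows "\<exists>M. \<forall>m\<ge>M. (\<Pi>\<^sub>E i\<in>I. lcs_last G) \<subseteq> S m"
proof -
  interpret mt G I S unfolding mt_def using assms by blast
  obtain p where p: "Nb I p" using good_I unfolding good_def by blast
  show ?thesis
  proof (intro exI allI impI)
    fix m assume pm: "p \<le> m"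
    have eq: "(\<Pi>\<^sub>E i\<in>I. lcs_last G) = (\<Pi>\<^sub>E i\<in>I. if i \<in> I then lcs_last G else {\<one>\<^bsub>G\<^esub>})"
      by (rule PiE_cong) simp
    show "(\<Pi>\<^sub>E i\<in>I. lcs_last G) \<subseteq> S m"
      using Nb_mono_lvl[OF p pm] unfolding Nb_def eq .
  qed
qed

end
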